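(* Let $c>0$ be an integer and $\mu,\nu\in\mathbb R$, and let $D=D^{\mu,\nu}_c$ be the quantum Heisenberg manifold. For every $n\in\mathbb Z$ there exist $\xi_1^n,\xi_2^n\in D^{(n)}$ such that $$(\xi_1^n)^*\xi_1^n+(\xi_2^n)^*\xi_2^n=1,\qquad \xi_1^n(\xi_1^n)^*+\xi_2^n(\xi_2^n)^*=1.$$ Furthermore, $\xi_1^n$ and $\xi_2^n$ can be chosen to be smooth functions.
   Context: Write $e(x)=e^{2\pi ix}$. Let $D_0$ be the space of functions $F:\mathbb R\times S^1\times\mathbb Z\to\mathbb C$, $(x,y,p)\mapsto F(x,y,p)$, such that $p\mapsto F(\cdot,\cdot,p)$ is finitely supported with values in bounded continuous functions on $\mathbb R\times S^1$, and $F(x+1,y,p)=e(-cp(y-p\nu))F(x,y,p)$. It is a $*$-algebra with product $(F_1\cdot F_2)(x,y,p)=\sum_{q\in\mathbb Z}F_1(x,y,q)F_2(x-2q\mu,y-2q\nu,p-q)$ and involution $F^*(x,y,p)=\overline{F(x-2p\mu,y-2p\nu,-p)}$. The quantum Heisenberg manifold $D^{\mu,\nu}_c$ (Rieffel) is the C*-completion of $D_0$. For $n\in\mathbb Z$, $D^{(n)}$ denotes the set of elements of the form $F(x,y,p)=\delta_{n,p}f(x,y)$ with $f$ continuous on $\mathbb R\times S^1$ and $f(x+1,y)=e(-cn(y-n\nu))f(x,y)$ (the $n$-th spectral subspace of the gauge action); the unit $1$ is the function $\delta_{0,p}$. *)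

theory Defs
  imports "HOL-Analysis.Analysis"
begin

text \<open>Elements of D_0 are functions F x y p with x real, y real read modulo 1
  (the circle S^1 = R/Z, so functions are 1-periodic in y), p integer.\<close>

type_synonym qhm = "real \<Rightarrow> real \<Rightarrow> int \<Rightarrow> complex"

definition ee :: "real \<Rightarrow> complex" where
  "ee t = cis (2 * pi * t)"

definition qhm_supp :: "qhm \<Rightarrow> int set" where
  "qhm_supp F = {q. \<exists>x y. F x y q \<noteq> 0}"

definition qhm_mult :: "real \<Rightarrow> real \<Rightarrow> qhm \<Rightarrow> qhm \<Rightarrow> qhm" where
  "qhm_mult \<mu> \<nu> F1 F2 = (\<lambda>x y p. \<Sum>q\<in>qhm_supp F1.
      F1 x y q * F2 (x - 2 * of_int q * \<mu>) (y - 2 * of_int q * \<nu>) (p - q))"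

definition qhm_star :: "real \<Rightarrow> real \<Rightarrow> qhm \<Rightarrow> qhm" where
  "qhm_star \<mu> \<nu> F = (\<lambda>x y p. cnj (F (x - 2 * of_int p * \<mu>) (y - 2 * of_int p * \<nu>) (- p)))"

definition qhm_one :: qhm where
  "qhm_one = (\<lambda>x y p. if p = 0 then 1 else 0)"

definition spectral_fun :: "int \<Rightarrow> real \<Rightarrow> int \<Rightarrow> (real \<Rightarrow> real \<Rightarrow> complex) \<Rightarrow> bool" where
  "spectral_fun c \<nu> n f \<longleftrightarrow>
     continuous_on UNIV (\<lambda>z. f (fst z) (snd z)) \<and>
     (\<forall>x y. f x (y + 1) = f x y) \<and>
     (\<forall>x y. f (x + 1) y = ee (- of_int c * of_int n * (y - of_int n * \<nu>)) * f x y)"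

definition delta_fun :: "int \<Rightarrow> (real \<Rightarrow> real \<Rightarrow> complex) \<Rightarrow> qhm" where
  "delta_fun n f = (\<lambda>x y p. if p = n then f x y else 0)"

definition spectral_subspace :: "int \<Rightarrow> real \<Rightarrow> int \<Rightarrow> qhm set" where
  "spectral_subspace c \<nu> n = {F. \<exists>f. spectral_fun c \<nu> n f \<and> F = delta_fun n f}"

definition smooth2 :: "(real \<Rightarrow> real \<Rightarrow> complex) \<Rightarrow> bool" where
  "smooth2 f \<longleftrightarrow> (\<exists>D :: nat \<Rightarrow> nat \<Rightarrow> real \<Rightarrow> real \<Rightarrow> complex.
     D 0 0 = f \<and>
     (\<forall>i j. continuous_on UNIV (\<lambda>z. D i j (fst z) (snd z))) \<and>
     (\<forall>i j x y. ((\<lambda>t. D i j t y) has_vector_derivative D (Suc i) j x y) (at x)) \<and>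
     (\<forall>i j x y. ((\<lambda>s. D i j x s) has_vector_derivative D i (Suc j) x y) (at y)))"

end

theory Submission
  imports Defs "HOL-Analysis.Analysis" "HOL-Computational_Algebra.Polynomial"
begin


fun Cn :: "nat \<Rightarrow> (real \<Rightarrow> real) \<Rightarrow> bool" where
  "Cn 0 f = True"
| "Cn (Suc n) f = (\<exists>g. (\<forall>x. (f has_real_derivative g x) (at x)) \<and> Cn n g)"

definition smooth1 :: "(real \<Rightarrow> real) \<Rightarrow> bool" where
  "smooth1 f \<longleftrightarrow> (\<forall>n. Cn n f)"

lemma Cn_Suc_mono: "Cn (Suc n) f \<Longrightarrow> Cn n f"
proof (induction n arbitrary: f)
  case 0 then show ?case by simp
next
  case (Suc n)
  then obtain g where "\<forall>x. (f has_real_derivative g x) (at x)" "Cn (Suc n) g" by auto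
  then show ?case using Suc.IH by auto
qed

lemma Cn_const: "Cn n (\<lambda>x. c)"
  by (induction n arbitrary: c) (auto intro!: exI[of _ "\<lambda>x. 0"] derivative_eq_intros)

lemma Cn_add: "Cn n f \<Longrightarrow> Cn n g \<Longrightarrow> Cn n (\<lambda>x. f x + g x)"
proof (induction n arbitrary: f g)
  case 0 then show ?case by simp
next
  case (Suc n)
  then obtain f' g' where "\<forall>x. (f has_real_derivative f' x) (at x)" "Cn n f'"
    "\<forall>x. (g has_real_derivative g' x) (at x)" "Cn n g'" by auto
  then show ?case using Suc.IH
    by (auto intro!: exI[of _ "\<lambda>x. f' x + g' x"] derivative_eq_intros)
qed

lemma Cn_mult: "Cn n f \<Longrightarrow> Cn n g \<Longrightarrow> Cn n (\<lambda>x. f x * g x)"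
proof (induction n arbitrary: f g)
  case 0 then show ?case by simp
next
  case (Suc n)
  then obtain f' g' where f': "\<forall>x. (f has_real_derivative f' x) (at x)" "Cn n f'"
    and g': "\<forall>x. (g has_real_derivative g' x) (at x)" "Cn n g'" by auto
  have "Cn n f" "Cn n g" using Suc.prems Cn_Suc_mono by auto
  then have "Cn n (\<lambda>x. f' x * g x + f x * g' x)"
    using Suc.IH Cn_add f' g' by auto
  moreover have "\<forall>x. ((\<lambda>x. f x * g x) has_real_derivative f' x * g x + f x * g' x) (at x)"
    using f' g' by (auto intro!: derivative_eq_intros)
  ultimately show ?case by auto
qed

lemma smooth1_deriv:
  assumes "smooth1 f"
  shows "(f has_real_derivative deriv f x) (at x)" "smooth1 (deriv f)"
proof -
  obtain g where g: "\<forall>x. (f has_real_derivative g x) (at x)"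
    using assms unfolding smooth1_def by (metis Cn.simps(2))
  then have gd: "g = deriv f" by (intro ext) (metis DERIV_imp_deriv)
  show "(f has_real_derivative deriv f x) (at x)" using g gd by auto
  show "smooth1 (deriv f)" unfolding smooth1_def
  proof
    fix n
    obtain h where h: "\<forall>x. (f has_real_derivative h x) (at x)" "Cn n h"
      using assms unfolding smooth1_def by (metis Cn.simps(2))
    then have "h = deriv f" by (intro ext) (metis DERIV_imp_deriv)
    then show "Cn n (deriv f)" using h by simp
  qed
qed

lemma smooth1_iter:
  assumes "smooth1 f"
  shows "smooth1 ((deriv ^^ i) f) \<and> (\<forall>x. ((deriv ^^ i) f has_real_derivative (deriv ^^ Suc i) f x) (at x))"
proof (induction i)
  case 0 then show ?case using assms smooth1_deriv by auto
next
  case (Suc i) then show ?case using smooth1_deriv by auto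
qed

lemma family_smooth1:
  assumes "\<And>i x. (D i has_real_derivative D (Suc i) x) (at x)"
  shows "smooth1 (D 0)"
proof -
  have "\<forall>i. Cn n (D i)" for n
    by (induction n) (use assms in auto)
  then show ?thesis unfolding smooth1_def by auto
qed

lemma Cn_comp: "smooth1 g \<Longrightarrow> Cn n f \<Longrightarrow> Cn n (\<lambda>x. g (f x))"
proof (induction n arbitrary: f g)
  case 0 then show ?case by simp
next
  case (Suc n)
  then obtain f' where f': "\<forall>x. (f has_real_derivative f' x) (at x)" "Cn n f'" by auto
  have "Cn n f" using Suc.prems Cn_Suc_mono by auto
  then have "Cn n (\<lambda>x. deriv g (f x))" using Suc.IH smooth1_deriv Suc.prems by auto
  then have "Cn n (\<lambda>x. deriv g (f x) * f' x)" using Cn_mult f' by auto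
  moreover have "\<forall>x. ((\<lambda>x. g (f x)) has_real_derivative deriv g (f x) * f' x) (at x)"
  proof
    fix x show "((\<lambda>x. g (f x)) has_real_derivative deriv g (f x) * f' x) (at x)"
      by (rule DERIV_chain2[OF smooth1_deriv(1)[OF Suc.prems(1)]]) (use f' in auto)
  qed
  ultimately show ?case by auto
qed

lemma smooth1_comp: "smooth1 g \<Longrightarrow> smooth1 f \<Longrightarrow> smooth1 (\<lambda>x. g (f x))"
  using Cn_comp unfolding smooth1_def by auto

lemma Cn_inverse: "Cn n g \<Longrightarrow> (\<forall>x. g x \<noteq> 0) \<Longrightarrow> Cn n (\<lambda>x. inverse (g x))"
proof (induction n arbitrary: g)
  case 0 then show ?case by simp
next
  case (Suc n)
  then obtain g' where g': "\<forall>x. (g has_real_derivative g' x) (at x)" "Cn n g'" by auto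
  have "Cn n g" using Suc.prems Cn_Suc_mono by auto
  then have "Cn n (\<lambda>x. inverse (g x))" using Suc by auto
  then have "Cn n (\<lambda>x. inverse (g x) * inverse (g x))" using Cn_mult by blast
  moreover have "Cn n (\<lambda>x. (-1) * g' x)" using Cn_mult[OF Cn_const g'(2)] by blast
  ultimately have "Cn n (\<lambda>x. ((-1) * g' x) * (inverse (g x) * inverse (g x)))" using Cn_mult by blast
  moreover have "\<forall>x. ((\<lambda>x. inverse (g x)) has_real_derivative ((-1) * g' x) * (inverse (g x) * inverse (g x))) (at x)"
    using g' Suc.prems(2) by (auto intro!: derivative_eq_intros simp: power2_eq_square)
  ultimately show ?case by auto
qed

lemma smooth1_const: "smooth1 (\<lambda>x. c)" using Cn_const smooth1_def by auto
lemma smooth1_add: "smooth1 f \<Longrightarrow> smooth1 g \<Longrightarrow> smooth1 (\<lambda>x. f x + g x)"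
  using Cn_add smooth1_def by auto
lemma smooth1_mult: "smooth1 f \<Longrightarrow> smooth1 g \<Longrightarrow> smooth1 (\<lambda>x. f x * g x)"
  using Cn_mult smooth1_def by auto
lemma smooth1_inverse: "smooth1 g \<Longrightarrow> (\<forall>x. g x \<noteq> 0) \<Longrightarrow> smooth1 (\<lambda>x. inverse (g x))"
  using Cn_inverse smooth1_def by auto
lemma smooth1_id: "smooth1 (\<lambda>x. x)"
proof -
  have "Cn n (\<lambda>x. x)" for n
    by (cases n) (auto intro!: exI[of _ "\<lambda>x. 1"] Cn_const)
  then show ?thesis using smooth1_def by auto
qed

lemma smooth1_sin_cos: "smooth1 sin \<and> smooth1 cos"
proof -
  have "Cn n sin \<and> Cn n cos" for n
  proof (induction n)
    case 0 then show ?case by simp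
  next
    case (Suc n)
    have "Cn n (\<lambda>x. (-1) * sin x)" by (rule Cn_mult[OF Cn_const]) (use Suc in simp)
    then have "Cn n (\<lambda>x. - sin x)" by simp
    moreover have d1: "\<forall>x. (sin has_real_derivative cos x) (at x)" by (auto intro!: derivative_eq_intros)
    moreover have d2: "\<forall>x. (cos has_real_derivative - sin x) (at x)" by (auto intro!: derivative_eq_intros)
    ultimately have "Cn (Suc n) sin" using Suc
      unfolding Cn.simps by (intro exI[of _ cos]) blast
    moreover have "Cn (Suc n) cos" using d2 \<open>Cn n (\<lambda>x. - sin x)\<close>
      unfolding Cn.simps by (intro exI[of _ "\<lambda>x. - sin x"]) blast
    ultimately show ?case by simp
  qed
  then show ?thesis using smooth1_def by auto
qed



fun Pp :: "nat \<Rightarrow> real poly" where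
  "Pp 0 = 1"
| "Pp (Suc i) = pCons 0 (pCons 0 (Pp i - pderiv (Pp i)))"

definition psiD :: "nat \<Rightarrow> real \<Rightarrow> real" where
  "psiD i t = (if t > 0 then poly (Pp i) (inverse t) * exp (- inverse t) else 0)"

lemma psi_deriv_pos:
  assumes "t > 0"
  shows "((\<lambda>t. poly Q (inverse t) * exp (- inverse t)) has_real_derivative
          poly (pCons 0 (pCons 0 (Q - pderiv Q))) (inverse t) * exp (- inverse t)) (at t)"
proof -
  have "((\<lambda>t. poly Q (inverse t) * exp (- inverse t)) has_real_derivative
     poly (pderiv Q) (inverse t) * (- (inverse t * inverse t)) * exp (- inverse t)
     + poly Q (inverse t) * (exp (- inverse t) * (- (- (inverse t * inverse t))))) (at t)"
    using assms
    by (auto intro!: derivative_eq_intros DERIV_chain2[OF poly_DERIV] simp: power2_eq_square)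
  moreover have "poly (pderiv Q) (inverse t) * (- (inverse t * inverse t)) * exp (- inverse t)
     + poly Q (inverse t) * (exp (- inverse t) * (- (- (inverse t * inverse t))))
     = poly (pCons 0 (pCons 0 (Q - pderiv Q))) (inverse t) * exp (- inverse t)"
    by (simp add: algebra_simps)
  ultimately show ?thesis by simp
qed

lemma poly_exp_lim: fixes Q :: "real poly" shows "((\<lambda>u. poly Q u * exp (- u)) \<longlongrightarrow> 0) at_top"
proof -
  have "((\<lambda>u. \<Sum>i\<le>degree Q. coeff Q i * (u ^ i / exp u)) \<longlongrightarrow> (\<Sum>i\<le>degree Q. coeff Q i * 0)) at_top"
    by (intro tendsto_sum tendsto_mult_left tendsto_power_div_exp_0)
  moreover have "(\<Sum>i\<le>degree Q. coeff Q i * (u ^ i / exp u)) = poly Q u * exp (- u)" for u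
    by (simp add: poly_altdef sum_distrib_right exp_minus divide_inverse mult.assoc)
  ultimately show ?thesis by simp
qed

lemma psiD_deriv0: "(psiD i has_real_derivative 0) (at 0)"
proof -
  have L: "((\<lambda>y. (psiD i y - psiD i 0) / (y - 0)) \<longlongrightarrow> 0) (at_left 0)"
  proof -
    have "eventually (\<lambda>y. (psiD i y - psiD i 0) / (y - 0) = 0) (at_left 0)"
      unfolding eventually_at_filter psiD_def by (intro always_eventually) auto
    then show ?thesis by (rule tendsto_eventually)
  qed
  have R: "((\<lambda>y. (psiD i y - psiD i 0) / (y - 0)) \<longlongrightarrow> 0) (at_right 0)"
  proof -
    have "((\<lambda>y. poly (pCons 0 (Pp i)) (inverse y) * exp (- inverse y)) \<longlongrightarrow> 0) (at_right 0)"
      by (rule filterlim_compose[OF poly_exp_lim filterlim_inverse_at_top_right])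
    moreover have "eventually (\<lambda>y. poly (pCons 0 (Pp i)) (inverse y) * exp (- inverse y)
        = (psiD i y - psiD i 0) / (y - 0)) (at_right 0)"
    proof -
      have "poly (pCons 0 (Pp i)) (inverse y) * exp (- inverse y)
        = (psiD i y - psiD i 0) / (y - 0)" if "y > 0" for y
        using that unfolding psiD_def by (simp add: field_simps)
      then show ?thesis by (rule eventually_mono[OF eventually_at_right_less]) simp
    qed
    ultimately show ?thesis by (rule Lim_transform_eventually)
  qed
  show ?thesis unfolding has_field_derivative_iff filterlim_at_split
    using L R by (rule conjI)
qed

lemma psiD_deriv: "(psiD i has_real_derivative psiD (Suc i) t) (at t)"
proof -
  consider "t > 0" | "t < 0" | "t = 0" by linarith
  then show ?thesis
  proof cases
    case 1
    have "((\<lambda>t. poly (Pp i) (inverse t) * exp (- inverse t)) has_real_derivative psiD (Suc i) t) (at t)"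
      using psi_deriv_pos[OF 1, of "Pp i"] 1 by (simp add: psiD_def)
    then show ?thesis
      by (rule has_field_derivative_transform_within_open[where S="{0<..}"]) (use 1 in \<open>auto simp: psiD_def\<close>)
  next
    case 2
    have "((\<lambda>t. 0) has_real_derivative psiD (Suc i) t) (at t)"
      using 2 by (simp add: psiD_def)
    then show ?thesis
      by (rule has_field_derivative_transform_within_open[where S="{..<0}"]) (use 2 in \<open>auto simp: psiD_def\<close>)
  next
    case 3
    then show ?thesis using psiD_deriv0 by (simp add: psiD_def)
  qed
qed

definition psi :: "real \<Rightarrow> real" where "psi = psiD 0"

lemma smooth1_psi: "smooth1 psi"
  unfolding psi_def by (rule family_smooth1) (rule psiD_deriv)

lemma psi_pos: "t > 0 \<Longrightarrow> psi t > 0" by (simp add: psi_def psiD_def)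
lemma psi_zero: "t \<le> 0 \<Longrightarrow> psi t = 0" by (simp add: psi_def psiD_def)
lemma psi_nonneg: "psi t \<ge> 0" by (simp add: psi_def psiD_def)



definition pp :: "real \<Rightarrow> real" where "pp x = cos (2 * pi * x)"
definition SS :: "real \<Rightarrow> real" where
  "SS x = psi (pp x + 1/2) * inverse (psi (pp x + 1/2) + psi (1/2 - pp x))"
definition AA :: "real \<Rightarrow> real" where "AA x = cos (pi / 2 * SS x)"
definition BB :: "real \<Rightarrow> real" where "BB x = sin (pi / 2 * SS x)"

lemma smooth1_pp: "smooth1 pp"
proof -
  have "smooth1 (\<lambda>x. 2 * pi * x)" by (rule smooth1_mult[OF smooth1_const smooth1_id])
  then show ?thesis unfolding pp_def using smooth1_comp[OF conjunct2[OF smooth1_sin_cos]] by simp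
qed

lemma denom_pos: "psi (pp x + 1/2) + psi (1/2 - pp x) > 0"
proof (cases "pp x + 1/2 > 0")
  case True then show ?thesis using psi_pos[OF True] psi_nonneg[of "1/2 - pp x"] by linarith
next
  case False then have h: "1/2 - pp x > 0" by linarith
  show ?thesis using psi_pos[OF h] psi_nonneg[of "pp x + 1/2"] by linarith
qed

lemma smooth1_SS: "smooth1 SS"
proof -
  have a: "smooth1 (\<lambda>x. pp x + 1/2)" by (rule smooth1_add[OF smooth1_pp smooth1_const])
  have b: "smooth1 (\<lambda>x. 1/2 - pp x)"
    using smooth1_add[OF smooth1_const smooth1_mult[OF smooth1_const smooth1_pp], of "1/2" "-1"] by simp
  have c: "smooth1 (\<lambda>x. psi (pp x + 1/2))" using smooth1_comp[OF smooth1_psi a] .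
  have d: "smooth1 (\<lambda>x. psi (1/2 - pp x))" using smooth1_comp[OF smooth1_psi b] .
  have e: "smooth1 (\<lambda>x. inverse (psi (pp x + 1/2) + psi (1/2 - pp x)))"
    by (rule smooth1_inverse[OF smooth1_add[OF c d]]) (use denom_pos in \<open>auto simp: less_le\<close>)
  show ?thesis unfolding SS_def by (rule smooth1_mult[OF c e])
qed

lemma smooth1_AA: "smooth1 AA" and smooth1_BB: "smooth1 BB"
proof -
  have "smooth1 (\<lambda>x. pi / 2 * SS x)" by (rule smooth1_mult[OF smooth1_const smooth1_SS])
  then show "smooth1 AA" "smooth1 BB" unfolding AA_def BB_def
    using smooth1_comp[OF conjunct2[OF smooth1_sin_cos]] smooth1_comp[OF conjunct1[OF smooth1_sin_cos]] by simp_all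
qed

lemma AA_BB: "(AA x)\<^sup>2 + (BB x)\<^sup>2 = 1"
  unfolding AA_def BB_def by (simp add: add.commute)

lemma pp_shift: "pp (x + of_int m) = pp x"
proof -
  have "2 * pi * (x + of_int m) = 2 * pi * x + of_int m * (2 * pi)" by (simp add: algebra_simps)
  then show ?thesis unfolding pp_def using cos.plus_of_int[of "2 * pi * x" m] by simp
qed

lemma AA_per: "AA (x + 1) = AA x" and BB_per: "BB (x + 1) = BB x"
  using pp_shift[of x 1] by (simp_all add: AA_def BB_def SS_def)

lemma cos_gt_half: "\<bar>t\<bar> < pi / 3 \<Longrightarrow> cos t > 1/2"
proof -
  assume h: "\<bar>t\<bar> < pi / 3"
  have "cos (pi / 3) < cos \<bar>t\<bar>"
    by (rule cos_monotone_0_pi) (use h in auto)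
  then show ?thesis by (simp add: cos_60 cos_abs_real)
qed

lemma AA_zero:
  assumes "\<bar>x + 0 - of_int m\<bar> < 1/6"
  shows "AA x = 0"
proof -
  have "pp x = cos (2 * pi * (x - of_int m))" using pp_shift[of "x - of_int m" m] by (simp add: pp_def)
  also have "\<dots> > 1/2"
    by (rule cos_gt_half) (use assms pi_gt_zero in \<open>auto simp: abs_mult\<close>)
  finally have "pp x > 1/2" .
  then have "psi (1/2 - pp x) = 0" "psi (pp x + 1/2) > 0" using psi_zero psi_pos by auto
  then have "SS x = 1" unfolding SS_def by simp
  then show ?thesis unfolding AA_def by simp
qed

lemma BB_zero:
  assumes "\<bar>x + 1/2 - of_int m\<bar> < 1/6"
  shows "BB x = 0"
proof -
  have "pp x = cos ((2*pi*(x+1/2-of_int m) + pi) + of_int (m - 1) * (2*pi))"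
    unfolding pp_def by (rule arg_cong[where f=cos]) (simp add: algebra_simps)
  also have "\<dots> = cos (2 * pi * (x + 1/2 - of_int m) + pi)"
    using cos.plus_of_int[of "2*pi*(x+1/2-of_int m) + pi" "m-1"] by simp
  also have "\<dots> = - cos (2 * pi * (x + 1/2 - of_int m))" by (rule cos_periodic_pi)
  also have "\<dots> < - (1/2)"
    using cos_gt_half[of "2 * pi * (x + 1/2 - of_int m)"] assms pi_gt_zero by (auto simp: abs_mult)
  finally have "pp x < - (1/2)" .
  then have "psi (pp x + 1/2) = 0" using psi_zero by auto
  then have "SS x = 0" unfolding SS_def by simp
  then show ?thesis unfolding BB_def by simp
qed



lemma ee_exp: "ee t = exp (\<i> * complex_of_real (2 * pi * t))"
  by (simp add: ee_def cis_conv_exp)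

lemma derivs_zero_open:
  assumes "smooth1 A" "open U" "\<forall>x\<in>U. A x = 0"
  shows "\<forall>x\<in>U. (deriv ^^ i) A x = 0"
proof (induction i)
  case 0 then show ?case using assms by simp
next
  case (Suc i)
  show ?case
  proof
    fix x assume x: "x \<in> U"
    have d: "((deriv ^^ i) A has_real_derivative (deriv ^^ Suc i) A x) (at x)"
      using smooth1_iter[OF assms(1)] by blast
    have "((\<lambda>_. 0) has_real_derivative 0) (at x)" by simp
    then have "((deriv ^^ i) A has_real_derivative 0) (at x)"
      by (rule has_field_derivative_transform_within_open[where S=U]) (use x assms Suc.IH in auto)
    then show "(deriv ^^ Suc i) A x = 0" using DERIV_unique d by blast
  qed
qed

lemma freeze:
  assumes "smooth1 A" "\<forall>m::int. \<exists>e>0. \<forall>x. \<bar>x + s - of_int m\<bar> < e \<longrightarrow> A x = 0"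
  shows "\<exists>U m. open U \<and> x0 \<in> U \<and> (\<forall>x\<in>U. \<forall>i. (deriv ^^ i) A x = 0 \<or> \<lfloor>x + s\<rfloor> = m)"
proof (cases "of_int \<lfloor>x0 + s\<rfloor> = x0 + s")
  case True
  obtain e where e: "e > 0" "\<forall>x. \<bar>x + s - of_int \<lfloor>x0 + s\<rfloor>\<bar> < e \<longrightarrow> A x = 0"
    using assms(2) by blast
  have "\<forall>x\<in>ball x0 e. A x = 0"
  proof
    fix x assume "x \<in> ball x0 e"
    then have "\<bar>x0 - x\<bar> < e" by (simp add: dist_real_def)
    moreover have "x + s - of_int \<lfloor>x0 + s\<rfloor> = x - x0" using True by linarith
    ultimately have "\<bar>x + s - of_int \<lfloor>x0 + s\<rfloor>\<bar> < e" by linarith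
    then show "A x = 0" using e(2) by blast
  qed
  then have z: "\<forall>x\<in>ball x0 e. \<forall>i. (deriv ^^ i) A x = 0"
    using derivs_zero_open[OF assms(1) open_ball] by simp
  have "open (ball x0 e)" "x0 \<in> ball x0 e" using e(1) by simp_all
  then have "open (ball x0 e) \<and> x0 \<in> ball x0 e \<and> (\<forall>x\<in>ball x0 e. \<forall>i. (deriv ^^ i) A x = 0 \<or> \<lfloor>x + s\<rfloor> = 0)"
    using z by simp
  then show ?thesis by (intro exI[of _ "ball x0 e"] exI[of _ 0])
next
  case False
  define m where "m = \<lfloor>x0 + s\<rfloor>"
  have lt: "of_int m < x0 + s" using False of_int_floor_le[of "x0 + s"] unfolding m_def by linarith
  define U where "U = {of_int m - s <..< of_int m + 1 - s}"
  have fl: "\<forall>x\<in>U. \<lfloor>x + s\<rfloor> = m"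
  proof
    fix x assume "x \<in> U"
    then have "of_int m \<le> x + s" "x + s < of_int m + 1" unfolding U_def by simp_all
    then show "\<lfloor>x + s\<rfloor> = m" by (simp only: floor_eq_iff)
  qed
  have ub: "x0 + s < of_int m + 1" unfolding m_def by (rule real_of_int_floor_add_one_gt)
  have "of_int m - s < x0" "x0 < of_int m + 1 - s" using lt ub by linarith+
  then have "x0 \<in> U" unfolding U_def by simp
  moreover have "open U" unfolding U_def by simp
  ultimately have "open U \<and> x0 \<in> U \<and> (\<forall>x\<in>U. \<forall>i. (deriv ^^ i) A x = 0 \<or> \<lfloor>x + s\<rfloor> = m)"
    using fl by simp
  then show ?thesis by (intro exI[of _ U] exI[of _ m])
qed

definition Gf :: "(real \<Rightarrow> real) \<Rightarrow> real \<Rightarrow> real \<Rightarrow> int \<Rightarrow> nat \<Rightarrow> nat \<Rightarrow> real \<Rightarrow> real \<Rightarrow> complex" where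
  "Gf A K b m i j x y = complex_of_real ((deriv ^^ i) A x) * (\<i> * complex_of_real (2 * pi * K * of_int m)) ^ j
      * ee (K * of_int m * (y - b))"

lemma ee_deriv:
  "((\<lambda>s. ee (w * (s - b))) has_vector_derivative \<i> * complex_of_real (2 * pi * w) * ee (w * (y - b))) (at y)"
proof -
  define h where "h z = exp (\<i> * complex_of_real (2 * pi * w) * (z - complex_of_real b))" for z
  have "(h has_field_derivative \<i> * complex_of_real (2 * pi * w) * h (of_real y)) (at (of_real y))"
    unfolding h_def by (auto intro!: derivative_eq_intros)
  then have "((\<lambda>s. h (of_real s)) has_vector_derivative \<i> * complex_of_real (2 * pi * w) * h (of_real y)) (at y)"
    using has_vector_derivative_real_field by blast
  moreover have "h (of_real s) = ee (w * (s - b))" for s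
    unfolding h_def ee_exp by (simp add: algebra_simps)
  ultimately show ?thesis by simp
qed

lemma Gf_dy: "((\<lambda>s. Gf A K b m i j x s) has_vector_derivative Gf A K b m i (Suc j) x y) (at y)"
proof -
  have "((\<lambda>s. (complex_of_real ((deriv ^^ i) A x) * (\<i> * complex_of_real (2 * pi * K * of_int m)) ^ j)
      * ee ((K * of_int m) * (s - b))) has_vector_derivative
      (complex_of_real ((deriv ^^ i) A x) * (\<i> * complex_of_real (2 * pi * K * of_int m)) ^ j) *
      (\<i> * complex_of_real (2 * pi * (K * of_int m)) * ee ((K * of_int m) * (y - b)))) (at y)"
    by (rule has_vector_derivative_mult_right[OF ee_deriv])
  then show ?thesis unfolding Gf_def by (simp add: algebra_simps)
qed

lemma Gf_dx:
  assumes "smooth1 A"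
  shows "((\<lambda>t. Gf A K b m i j t y) has_vector_derivative Gf A K b m (Suc i) j x y) (at x)"
proof -
  have "((deriv ^^ i) A has_real_derivative (deriv ^^ Suc i) A x) (at x)"
    using smooth1_iter[OF assms] by blast
  then have "((\<lambda>t. complex_of_real ((deriv ^^ i) A t)) has_vector_derivative complex_of_real ((deriv ^^ Suc i) A x)) (at x)"
    by (rule has_vector_derivative_of_real)
  then have "((\<lambda>t. complex_of_real ((deriv ^^ i) A t) * ((\<i> * complex_of_real (2 * pi * K * of_int m)) ^ j
      * ee (K * of_int m * (y - b)))) has_vector_derivative complex_of_real ((deriv ^^ Suc i) A x) * ((\<i> * complex_of_real (2 * pi * K * of_int m)) ^ j
      * ee (K * of_int m * (y - b)))) (at x)"
    by (rule has_vector_derivative_mult_left)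
  then show ?thesis unfolding Gf_def by (simp add: mult.assoc)
qed

lemma Gf_cont:
  assumes "smooth1 A"
  shows "continuous_on S (\<lambda>z. Gf A K b m i j (fst z) (snd z))"
proof -
  have "continuous_on UNIV ((deriv ^^ i) A)"
  proof (rule continuous_at_imp_continuous_on, rule ballI)
    fix x :: real
    have "((deriv ^^ i) A has_real_derivative (deriv ^^ Suc i) A x) (at x)"
      using smooth1_iter[OF assms] by blast
    then show "isCont ((deriv ^^ i) A) x" by (rule DERIV_isCont)
  qed
  then have c: "continuous_on S (\<lambda>z. (deriv ^^ i) A (fst z))"
    by (rule continuous_on_compose2) (auto intro: continuous_intros)
  show ?thesis unfolding Gf_def ee_exp
    by (intro continuous_intros continuous_on_of_real c)
qed

lemma smooth2_phase:
  assumes "smooth1 A" "\<forall>m::int. \<exists>e>0. \<forall>x. \<bar>x + s - of_int m\<bar> < e \<longrightarrow> A x = 0"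
  shows "smooth2 (\<lambda>x y. complex_of_real (A x) * ee (K * of_int \<lfloor>x + s\<rfloor> * (y - b)))"
proof -
  define D where "D i j x y = Gf A K b \<lfloor>x + s\<rfloor> i j x y" for i j x y
  have loc: "\<exists>U m. open U \<and> x0 \<in> U \<and> (\<forall>x\<in>U. \<forall>i j y. D i j x y = Gf A K b m i j x y)" for x0
  proof -
    obtain U m where U: "open U" "x0 \<in> U" "\<forall>x\<in>U. \<forall>i. (deriv ^^ i) A x = 0 \<or> \<lfloor>x + s\<rfloor> = m"
      using freeze[OF assms] by blast
    have "\<forall>x\<in>U. \<forall>i j y. D i j x y = Gf A K b m i j x y"
    proof (intro ballI allI)
      fix x i j y assume "x \<in> U"
      then have "(deriv^^i) A x = 0 \<or> \<lfloor>x+s\<rfloor> = m" using U(3) by blast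
      then show "D i j x y = Gf A K b m i j x y" unfolding D_def Gf_def by auto
    qed
    then show ?thesis using U by blast
  qed
  have f0: "D 0 0 = (\<lambda>x y. complex_of_real (A x) * ee (K * of_int \<lfloor>x + s\<rfloor> * (y - b)))"
    by (intro ext) (simp add: D_def Gf_def)
  have fc: "continuous_on UNIV (\<lambda>z. D i j (fst z) (snd z))" for i j
  proof -
    have "isCont (\<lambda>z. D i j (fst z) (snd z)) z" for z
    proof -
      obtain U m where U: "open U" "fst z \<in> U" "\<forall>x\<in>U. \<forall>i j y. D i j x y = Gf A K b m i j x y"
        using loc[of "fst z"] by (elim exE conjE) blast
      have op: "open (U \<times> (UNIV :: real set))" using U(1) by (simp add: open_Times)
      have "continuous_on (U \<times> UNIV) (\<lambda>z. Gf A K b m i j (fst z) (snd z))" by (rule Gf_cont[OF assms(1)])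
      then have "continuous_on (U \<times> UNIV) (\<lambda>z. D i j (fst z) (snd z))"
        by (rule continuous_on_cong[THEN iffD1, rotated 2]) (use U(3) in auto)
      moreover have "z \<in> U \<times> UNIV" using U(2) by (cases z) auto
      ultimately show ?thesis using continuous_on_eq_continuous_at[OF op] by blast
    qed
    then show ?thesis by (simp add: continuous_at_imp_continuous_on)
  qed
  have fx: "((\<lambda>t. D i j t y) has_vector_derivative D (Suc i) j x y) (at x)" for i j x y
  proof -
    obtain U m where U: "open U" "x \<in> U" "\<forall>x\<in>U. \<forall>i j y. D i j x y = Gf A K b m i j x y"
      using loc[of x] by (elim exE conjE) blast
    have "((\<lambda>t. Gf A K b m i j t y) has_vector_derivative Gf A K b m (Suc i) j x y) (at x)"
      by (rule Gf_dx[OF assms(1)])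
    then have "((\<lambda>t. D i j t y) has_vector_derivative Gf A K b m (Suc i) j x y) (at x)"
      by (rule has_vector_derivative_transform_within_open[where S=U]) (use U in auto)
    then show ?thesis using U by simp
  qed
  have fy: "((\<lambda>s. D i j x s) has_vector_derivative D i (Suc j) x y) (at y)" for i j x y
    unfolding D_def by (rule Gf_dy)
  show ?thesis unfolding smooth2_def by (intro exI[of _ D] conjI allI f0 fc fx fy)
qed



lemma ee_add: "ee (a + b) = ee a * ee b"
  by (simp add: ee_def cis_mult distrib_left)

lemma ee_int: "ee (of_int j) = 1"
  unfolding ee_def by (rule cis_multiple_2pi) simp

lemma cnj_ee: "cnj (ee t) * ee t = 1"
  by (simp add: ee_def cis_cnj cis_mult)

lemma smooth2_cont: "smooth2 f \<Longrightarrow> continuous_on UNIV (\<lambda>z. f (fst z) (snd z))"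
  unfolding smooth2_def by metis

lemma spectral_phase:
  fixes A :: "real \<Rightarrow> real"
  assumes per: "\<And>x. A (x + 1) = A x" and sm: "smooth2 (\<lambda>x y. complex_of_real (A x) * ee ((- of_int c * of_int n) * of_int \<lfloor>x + s\<rfloor> * (y - of_int n * \<nu>)))"
  shows "spectral_fun c \<nu> n (\<lambda>x y. complex_of_real (A x) * ee ((- of_int c * of_int n) * of_int \<lfloor>x + s\<rfloor> * (y - of_int n * \<nu>)))"
  unfolding spectral_fun_def
proof (intro conjI allI)
  show "continuous_on UNIV (\<lambda>z. complex_of_real (A (fst z)) * ee ((- of_int c * of_int n) * of_int \<lfloor>fst z + s\<rfloor> * (snd z - of_int n * \<nu>)))"
    using smooth2_cont[OF sm] by simp
next
  fix x y :: real
  let ?m = "\<lfloor>x + s\<rfloor>"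
  have "(- of_int c * of_int n) * of_int ?m * (y + 1 - of_int n * \<nu>)
      = (- of_int c * of_int n) * of_int ?m * (y - of_int n * \<nu>) + of_int (- c * n * ?m)"
    by (simp add: algebra_simps)
  then show "complex_of_real (A x) * ee ((- of_int c * of_int n) * of_int ?m * (y + 1 - of_int n * \<nu>)) =
    complex_of_real (A x) * ee ((- of_int c * of_int n) * of_int ?m * (y - of_int n * \<nu>))"
    by (simp only: ee_add ee_int mult_1_right)
next
  fix x y :: real
  let ?m = "\<lfloor>x + s\<rfloor>"
  have fl: "\<lfloor>x + 1 + s\<rfloor> = ?m + 1"
    by (metis add.commute add.left_commute floor_add_int of_int_1)
  have "(- of_int c * of_int n) * of_int (?m + 1) * (y - of_int n * \<nu>)
     = (- of_int c * of_int n * (y - of_int n * \<nu>)) + (- of_int c * of_int n) * of_int ?m * (y - of_int n * \<nu>)"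
    by (simp add: algebra_simps)
  then show "complex_of_real (A (x + 1)) * ee ((- of_int c * of_int n) * of_int \<lfloor>x + 1 + s\<rfloor> * (y - of_int n * \<nu>)) =
    ee (- of_int c * of_int n * (y - of_int n * \<nu>)) *
    (complex_of_real (A x) * ee ((- of_int c * of_int n) * of_int ?m * (y - of_int n * \<nu>)))"
    by (simp only: fl per ee_add mult_ac)
qed

lemma supp_delta: "qhm_supp (delta_fun n f) \<subseteq> {n}"
  unfolding qhm_supp_def delta_fun_def by auto

lemma sum_single:
  assumes "S \<subseteq> {a}" "a \<notin> S \<Longrightarrow> g a = 0"
  shows "sum g S = g a"
proof (cases "a \<in> S")
  case True then have "S = {a}" using assms(1) by auto
  then show ?thesis by simp
next
  case False then have "S = {}" using assms(1) by auto
  then show ?thesis using assms(2) False by simp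
qed

lemma mult_delta:
  "qhm_mult \<mu> \<nu> (delta_fun n f) G x y p = f x y * G (x - 2 * of_int n * \<mu>) (y - 2 * of_int n * \<nu>) (p - n)"
proof -
  have "(\<Sum>q\<in>qhm_supp (delta_fun n f). delta_fun n f x y q * G (x - 2 * of_int q * \<mu>) (y - 2 * of_int q * \<nu>) (p - q))
     = delta_fun n f x y n * G (x - 2 * of_int n * \<mu>) (y - 2 * of_int n * \<nu>) (p - n)"
  proof (rule sum_single[OF supp_delta])
    assume "n \<notin> qhm_supp (delta_fun n f)"
    then have "delta_fun n f x y n = 0" unfolding qhm_supp_def by auto
    then show "delta_fun n f x y n * G (x - 2 * of_int n * \<mu>) (y - 2 * of_int n * \<nu>) (p - n) = 0" by simp
  qed
  then show ?thesis unfolding qhm_mult_def by (simp add: delta_fun_def)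
qed

lemma star_delta:
  "qhm_star \<mu> \<nu> (delta_fun n f) = delta_fun (- n) (\<lambda>x y. cnj (f (x + 2 * of_int n * \<mu>) (y + 2 * of_int n * \<nu>)))"
  unfolding qhm_star_def delta_fun_def by (intro ext) auto

lemma prod1:
  "qhm_mult \<mu> \<nu> (qhm_star \<mu> \<nu> (delta_fun n f)) (delta_fun n f) x y p
   = (if p = 0 then cnj (f (x + 2 * of_int n * \<mu>) (y + 2 * of_int n * \<nu>)) * f (x + 2 * of_int n * \<mu>) (y + 2 * of_int n * \<nu>) else 0)"
  unfolding star_delta mult_delta by (simp add: delta_fun_def)

lemma prod2:
  "qhm_mult \<mu> \<nu> (delta_fun n f) (qhm_star \<mu> \<nu> (delta_fun n f)) x y p
   = (if p = 0 then f x y * cnj (f x y) else 0)"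
  unfolding star_delta mult_delta by (simp add: delta_fun_def)

lemma phase_norm:
  "cnj (complex_of_real a * ee t) * (complex_of_real a * ee t) = complex_of_real (a^2)"
proof -
  have "cnj (complex_of_real a * ee t) * (complex_of_real a * ee t) = complex_of_real (a * a) * (cnj (ee t) * ee t)"
    by (simp add: mult_ac)
  then show ?thesis by (simp add: cnj_ee power2_eq_square)
qed



theorem mainTheorem10:
  fixes c :: int and \<mu> \<nu> :: real
  assumes "c > 0"
  shows "\<forall>n::int. \<exists>f1 f2. smooth2 f1 \<and> smooth2 f2 \<and>
           delta_fun n f1 \<in> spectral_subspace c \<nu> n \<and>
           delta_fun n f2 \<in> spectral_subspace c \<nu> n \<and>
           (let \<xi>1 = delta_fun n f1; \<xi>2 = delta_fun n f2 in
             (\<lambda>x y p. qhm_mult \<mu> \<nu> (qhm_star \<mu> \<nu> \<xi>1) \<xi>1 x y p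
                    + qhm_mult \<mu> \<nu> (qhm_star \<mu> \<nu> \<xi>2) \<xi>2 x y p) = qhm_one \<and>
             (\<lambda>x y p. qhm_mult \<mu> \<nu> \<xi>1 (qhm_star \<mu> \<nu> \<xi>1) x y p
                    + qhm_mult \<mu> \<nu> \<xi>2 (qhm_star \<mu> \<nu> \<xi>2) x y p) = qhm_one)"
proof
  fix n :: int
  define f1 where "f1 = (\<lambda>x y. complex_of_real (AA x) * ee ((- of_int c * of_int n) * of_int \<lfloor>x + 0\<rfloor> * (y - of_int n * \<nu>)))"
  define f2 where "f2 = (\<lambda>x y. complex_of_real (BB x) * ee ((- of_int c * of_int n) * of_int \<lfloor>x + 1/2\<rfloor> * (y - of_int n * \<nu>)))"
  have v1: "\<forall>m::int. \<exists>e>0. \<forall>x. \<bar>x + 0 - of_int m\<bar> < e \<longrightarrow> AA x = 0"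
  proof
    fix m :: int
    have "\<forall>x. \<bar>x + 0 - of_int m\<bar> < 1/6 \<longrightarrow> AA x = 0" using AA_zero by blast
    then show "\<exists>e>0. \<forall>x. \<bar>x + 0 - of_int m\<bar> < e \<longrightarrow> AA x = 0" by (intro exI[of _ "1/6"]) simp
  qed
  have v2: "\<forall>m::int. \<exists>e>0. \<forall>x. \<bar>x + 1/2 - of_int m\<bar> < e \<longrightarrow> BB x = 0"
  proof
    fix m :: int
    have "\<forall>x. \<bar>x + 1/2 - of_int m\<bar> < 1/6 \<longrightarrow> BB x = 0" using BB_zero by blast
    then show "\<exists>e>0. \<forall>x. \<bar>x + 1/2 - of_int m\<bar> < e \<longrightarrow> BB x = 0" by (intro exI[of _ "1/6"]) simp
  qed
  have s1: "smooth2 f1" unfolding f1_def by (rule smooth2_phase[OF smooth1_AA v1])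
  have s2: "smooth2 f2" unfolding f2_def by (rule smooth2_phase[OF smooth1_BB v2])
  have sp1: "spectral_fun c \<nu> n f1" unfolding f1_def
    by (rule spectral_phase[OF AA_per s1[unfolded f1_def]])
  have sp2: "spectral_fun c \<nu> n f2" unfolding f2_def
    by (rule spectral_phase[OF BB_per s2[unfolded f2_def]])
  have d1: "delta_fun n f1 \<in> spectral_subspace c \<nu> n"
    unfolding spectral_subspace_def using sp1 by blast
  have d2: "delta_fun n f2 \<in> spectral_subspace c \<nu> n"
    unfolding spectral_subspace_def using sp2 by blast
  have nrm: "cnj (f1 x y) * f1 x y + cnj (f2 x y) * f2 x y = 1" for x y
  proof -
    have "cnj (f1 x y) * f1 x y + cnj (f2 x y) * f2 x y = complex_of_real ((AA x)\<^sup>2 + (BB x)\<^sup>2)"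
      unfolding f1_def f2_def phase_norm by simp
    then show ?thesis using AA_BB by simp
  qed
  have nrm2: "f1 x y * cnj (f1 x y) + f2 x y * cnj (f2 x y) = 1" for x y
    using nrm[of x y] by (simp add: mult.commute)
  have e1: "(\<lambda>x y p. qhm_mult \<mu> \<nu> (qhm_star \<mu> \<nu> (delta_fun n f1)) (delta_fun n f1) x y p
                    + qhm_mult \<mu> \<nu> (qhm_star \<mu> \<nu> (delta_fun n f2)) (delta_fun n f2) x y p) = qhm_one"
    unfolding prod1 qhm_one_def by (intro ext) (simp add: nrm)
  have e2: "(\<lambda>x y p. qhm_mult \<mu> \<nu> (delta_fun n f1) (qhm_star \<mu> \<nu> (delta_fun n f1)) x y p
                    + qhm_mult \<mu> \<nu> (delta_fun n f2) (qhm_star \<mu> \<nu> (delta_fun n f2)) x y p) = qhm_one"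
    unfolding prod2 qhm_one_def by (intro ext) (simp add: nrm2)
  show "\<exists>f1 f2. smooth2 f1 \<and> smooth2 f2 \<and>
           delta_fun n f1 \<in> spectral_subspace c \<nu> n \<and>
           delta_fun n f2 \<in> spectral_subspace c \<nu> n \<and>
           (let \<xi>1 = delta_fun n f1; \<xi>2 = delta_fun n f2 in
             (\<lambda>x y p. qhm_mult \<mu> \<nu> (qhm_star \<mu> \<nu> \<xi>1) \<xi>1 x y p
                    + qhm_mult \<mu> \<nu> (qhm_star \<mu> \<nu> \<xi>2) \<xi>2 x y p) = qhm_one \<and>
             (\<lambda>x y p. qhm_mult \<mu> \<nu> \<xi>1 (qhm_star \<mu> \<nu> \<xi>1) x y p
                    + qhm_mult \<mu> \<nu> \<xi>2 (qhm_star \<mu> \<nu> \<xi>2) x y p) = qhm_one)"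
    unfolding Let_def by (intro exI[of _ f1] exI[of _ f2] conjI s1 s2 d1 d2 e1 e2)
qed

end
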